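(* Let $a,b\in\mathbb{R}$ with $b\neq0$ and $|a|<1$, let $g\in L^\infty(\mathbb{R})$, and let $f\in L^\infty(\mathbb{R})$ be the solution of $f(x)-af(bx)=g(x)$ (i.e. $M_{a,b}f=g$, where $(M_{a,b}f)(x)=f(x)-af(bx)$). Then: (1) if $b>0$, then $f\in C([0,\infty))$ if and only if $g\in C([0,\infty))$; (2) if $b\ge1$, then $f\in C([1,\infty))$ if and only if $g\in C([1,\infty))$; (3) if $0<b\le1$, then $f\in C([0,1])$ if and only if $g\in C([0,1])$.
   Context: For $X\subseteq\mathbb{R}$, $C(X)$ is the space of bounded uniformly continuous real-valued functions on $X$; a function in $L^\infty(\mathbb{R})$ is said to lie in $C(X)$ if its restriction to $X$ agrees almost everywhere with an element of $C(X)$. *)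

theory Defs
  imports "HOL-Analysis.Analysis"
begin

definition Linfty :: "(real \<Rightarrow> real) \<Rightarrow> bool" where
  "Linfty f \<longleftrightarrow> f \<in> borel_measurable lborel \<and> (\<exists>C. AE x in lborel. \<bar>f x\<bar> \<le> C)"

text \<open>C(X): bounded uniformly continuous real functions on X.\<close>
definition BUC :: "real set \<Rightarrow> (real \<Rightarrow> real) set" where
  "BUC X = {h. uniformly_continuous_on X h \<and> bounded (h ` X)}"

definition in_C :: "(real \<Rightarrow> real) \<Rightarrow> real set \<Rightarrow> bool" where
  "in_C f X \<longleftrightarrow> (\<exists>h\<in>BUC X. AE x in lborel. x \<in> X \<longrightarrow> f x = h x)"

definition M_op :: "real \<Rightarrow> real \<Rightarrow> (real \<Rightarrow> real) \<Rightarrow> real \<Rightarrow> real" where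
  "M_op a b f x = f x - a * f (b * x)"

end

theory Submission imports Defs begin

lemma AE_scale:
  fixes c :: real
  assumes c: "c \<noteq> 0" and P: "AE x in lborel. P x"
  shows "AE x in lborel. P (c * x)"
proof -
  obtain N where N00: "{x \<in> space lborel. \<not> P x} \<subseteq> N" "emeasure lborel N = 0" "N \<in> sets lborel"
    by (rule AE_E[OF P])
  have N0: "{x \<in> space lborel. \<not> P x} \<subseteq> N" "N \<in> null_sets lborel"
    using N00 by (auto intro: null_setsI)
  have N1: "{x. \<not> P x} \<subseteq> N" using N0(1) by (simp only: space_lborel space_borel UNIV_I simp_thms)
  have A: "AE x in lborel. x \<notin> N" using N0(2) by (rule AE_not_in)
  moreover have NB: "N \<in> sets borel" using null_setsD2[OF N0(2)] by (simp only: sets_lborel)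
  moreover have PR: "Measurable.pred borel (\<lambda>x. x \<notin> N)"
    unfolding pred_def
  proof -
    have "{x \<in> space borel. x \<notin> N} = space borel - N" by blast
    then show "{x \<in> space borel. x \<notin> N} \<in> sets borel" using NB by (simp only: sets.Diff sets.top)
  qed
  have "AE x in lborel. 0 + c * x \<notin> N"
    using AE_borel_affine[OF c PR A, where t=0] .
  then show ?thesis
  proof (rule eventually_mono)
    fix x assume "0 + c * x \<notin> N"
    then have "c * x \<notin> N" by simp
    then show "P (c * x)" using N1 by auto
  qed
qed

lemma uc_subset:
  assumes "uniformly_continuous_on T h" "S \<subseteq> T"
  shows "uniformly_continuous_on S (h::real\<Rightarrow>real)"
  using assms unfolding uniformly_continuous_on_def by (meson subsetD)

lemma uc_scale_comp:
  fixes h :: "real \<Rightarrow> real"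
  assumes h: "uniformly_continuous_on X h" and X: "\<And>x. x \<in> X \<Longrightarrow> c * x \<in> X"
  shows "uniformly_continuous_on X (\<lambda>x. h (c * x))"
proof (rule uniformly_continuous_on_compose[of X "\<lambda>x. c * x" h])
  show "uniformly_continuous_on X (\<lambda>x. c * x)"
    using uniformly_continuous_on_cmul[OF uniformly_continuous_on_id, of X c] by simp
  show "uniformly_continuous_on ((*) c ` X) h"
    using uc_subset[OF h] X by blast
qed

lemma iter_AE:
  fixes a b :: real and f g :: "real \<Rightarrow> real"
  assumes b: "b \<noteq> 0" and E: "AE x in lborel. f x - a * f (b * x) = g x"
  shows "AE x in lborel. f x = (\<Sum>n<N. a^n * g (b^n * x)) + a^N * f (b^N * x)"
proof (induction N)
  case 0
  then show ?case by simp
next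
  case (Suc N)
  have E': "AE x in lborel. f (b^N * x) - a * f (b * (b^N * x)) = g (b^N * x)"
    using AE_scale[OF _ E, of "b^N"] b by simp
  show ?case using Suc E'
  proof eventually_elim
    case (elim x)
    have "b * (b^N * x) = b^Suc N * x" by simp
    then show ?case using elim by (simp add: algebra_simps)
  qed
qed

lemma tail_bound:
  fixes u :: "nat \<Rightarrow> real"
  assumes u: "\<And>n. \<bar>u n\<bar> \<le> B * r^n" and r: "0 \<le> r" "r < 1"
  shows "summable u" and "\<bar>suminf u - (\<Sum>n<N. u n)\<bar> \<le> B * r^N / (1 - r)"
proof -
  have sg: "summable (\<lambda>n. B * r^n)" using r by (intro summable_mult summable_geometric) simp
  show su: "summable u" using u by (intro summable_comparison_test'[OF sg]) simp
  have sN: "summable (\<lambda>m. u (m + N))" using su by (simp add: summable_iff_shift)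
  have sgN: "summable (\<lambda>m. (B * r^N) * r^m)" using r by (intro summable_mult summable_geometric) simp
  have uN: "\<bar>u (m + N)\<bar> \<le> B * r ^ N * r ^ m" for m
    using u[of "m + N"] by (simp add: power_add mult_ac)
  have "suminf u - (\<Sum>n<N. u n) = (\<Sum>m. u (m + N))"
    using suminf_split_initial_segment[OF su, of N] by simp
  also have "\<bar>\<dots>\<bar> \<le> (\<Sum>m. \<bar>u (m + N)\<bar>)"
  proof -
    have "summable (\<lambda>m. norm (u (m + N)))"
      using uN by (intro summable_comparison_test'[OF sgN]) simp
    then show ?thesis using summable_norm[of "\<lambda>m. u (m + N)"] by simp
  qed
  also have "\<dots> \<le> (\<Sum>m. (B * r^N) * r^m)"
  proof (rule suminf_le)
    show "\<And>m. \<bar>u (m + N)\<bar> \<le> B * r ^ N * r ^ m" by (rule uN)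
    show "summable (\<lambda>m. \<bar>u (m + N)\<bar>)"
      using uN by (intro summable_comparison_test'[OF sgN]) simp
  qed (rule sgN)
  also have "\<dots> = B * r^N / (1 - r)"
    using r by (simp add: suminf_mult summable_geometric suminf_geometric)
  finally show "\<bar>suminf u - (\<Sum>n<N. u n)\<bar> \<le> B * r^N / (1 - r)" .
qed

lemma fwd:
  fixes a b :: real and f g :: "real \<Rightarrow> real"
  assumes b: "b \<noteq> 0" and X: "\<And>x. x \<in> X \<Longrightarrow> b * x \<in> X"
    and E: "AE x in lborel. f x - a * f (b * x) = g x" and F: "in_C f X"
  shows "in_C g X"
proof -
  obtain h where h: "h \<in> BUC X" "AE x in lborel. x \<in> X \<longrightarrow> f x = h x"
    using F unfolding in_C_def by blast
  have huc: "uniformly_continuous_on X h" and hb: "bounded (h ` X)" using h(1) by (auto simp: BUC_def)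
  obtain B where B: "\<And>x. x \<in> X \<Longrightarrow> \<bar>h x\<bar> \<le> B" using hb unfolding bounded_real by blast
  define k where "k x = h x - a * h (b * x)" for x
  have kuc: "uniformly_continuous_on X k"
    unfolding k_def
    using uniformly_continuous_on_diff[OF huc uniformly_continuous_on_cmul[OF uc_scale_comp[OF huc X], of a]]
    by simp
  have kb: "bounded (k ` X)" unfolding bounded_real
  proof (intro exI ballI)
    fix y assume "y \<in> k ` X"
    then obtain x where x: "x \<in> X" "y = k x" by blast
    have "\<bar>k x\<bar> \<le> \<bar>h x\<bar> + \<bar>a\<bar> * \<bar>h (b * x)\<bar>" unfolding k_def by (simp add: abs_mult[symmetric])
    also have "\<dots> \<le> B + \<bar>a\<bar> * B" using B x X by (intro add_mono mult_left_mono) auto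
    finally show "\<bar>y\<bar> \<le> B + \<bar>a\<bar> * B" using x by simp
  qed
  have h': "AE x in lborel. b * x \<in> X \<longrightarrow> f (b * x) = h (b * x)"
    using AE_scale[OF b h(2)] .
  have "AE x in lborel. x \<in> X \<longrightarrow> g x = k x"
    using E h(2) h'
  proof eventually_elim
    case (elim x)
    then show ?case using X unfolding k_def by auto
  qed
  then show ?thesis unfolding in_C_def BUC_def using kuc kb by blast
qed

lemma bwd:
  fixes a b :: real and f g :: "real \<Rightarrow> real"
  assumes b: "b \<noteq> 0" and a: "\<bar>a\<bar> < 1" and X: "\<And>x. x \<in> X \<Longrightarrow> b * x \<in> X"
    and E: "AE x in lborel. f x - a * f (b * x) = g x" and Lf: "Linfty f" and G: "in_C g X"
  shows "in_C f X"
proof -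
  obtain k where k: "k \<in> BUC X" "AE x in lborel. x \<in> X \<longrightarrow> g x = k x"
    using G unfolding in_C_def by blast
  have kuc: "uniformly_continuous_on X k" and kb: "bounded (k ` X)" using k(1) by (auto simp: BUC_def)
  obtain B0 where B0: "\<And>x. x \<in> X \<Longrightarrow> \<bar>k x\<bar> \<le> B0" using kb unfolding bounded_real by blast
  define B where "B = max B0 0"
  have B: "\<And>x. x \<in> X \<Longrightarrow> \<bar>k x\<bar> \<le> B" "B \<ge> 0" using B0 unfolding B_def by force+
  obtain C where C: "AE x in lborel. \<bar>f x\<bar> \<le> C" using Lf unfolding Linfty_def by blast
  have Xn: "b^n * x \<in> X" if "x \<in> X" for n x
  proof (induction n)
    case 0 then show ?case using that by simp
  next
    case (Suc n)
    have "b^Suc n * x = b * (b^n * x)" by simp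
    then show ?case using X[OF Suc] by (simp only:)
  qed
  define r where "r = \<bar>a\<bar>"
  have r: "0 \<le> r" "r < 1" using a unfolding r_def by auto
  have ub: "\<bar>a^n * k (b^n * x)\<bar> \<le> B * r^n" if "x \<in> X" for x n
  proof -
    have "\<bar>a^n * k (b^n * x)\<bar> = r^n * \<bar>k (b^n * x)\<bar>" unfolding r_def by (simp add: abs_mult power_abs)
    also have "\<dots> \<le> r^n * B" using B(1)[OF Xn[OF that]] r by (intro mult_left_mono) auto
    finally show ?thesis by (simp add: mult_ac)
  qed
  define h where "h x = suminf (\<lambda>n. a^n * k (b^n * x))" for x
  define S where "S N x = (\<Sum>n<N. a^n * k (b^n * x))" for N x
  define K where "K = B / (1 - r)"
  have tail: "\<bar>h x - S N x\<bar> \<le> r^N * K" if "x \<in> X" for x N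
    using tail_bound(2)[OF ub[OF that] r, of N] unfolding h_def S_def K_def by (simp add: mult_ac)
  have lim: "(\<lambda>N. r^N * D) \<longlonglongrightarrow> 0" for D
    by (rule tendsto_mult_left_zero[OF LIMSEQ_power_zero]) (use r in simp)
  have huc: "uniformly_continuous_on X h"
    unfolding uniformly_continuous_on_def
  proof (intro allI impI)
    fix e :: real assume e: "e > 0"
    have "eventually (\<lambda>N. r^N * K < e/4) sequentially"
      using order_tendstoD(2)[OF lim[of K], of "e/4"] e by simp
    then obtain N where N: "r^N * K < e/4" by (auto simp: eventually_sequentially)
    have SU: "uniformly_continuous_on X (S N)"
      unfolding S_def
      using uniformly_continuous_on_sum[of "{..<N}" X "\<lambda>n x. a^n *\<^sub>R k (b^n * x)",
          OF uniformly_continuous_on_cmul[OF uc_scale_comp[OF kuc Xn]]]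
      by simp
    obtain d where d: "d > 0" "\<And>x x'. x \<in> X \<Longrightarrow> x' \<in> X \<Longrightarrow> dist x' x < d \<Longrightarrow> dist (S N x') (S N x) < e/2"
      using SU e unfolding uniformly_continuous_on_def by (meson half_gt_zero)
    show "\<exists>d>0. \<forall>x\<in>X. \<forall>x'\<in>X. dist x' x < d \<longrightarrow> dist (h x') (h x) < e"
    proof (intro exI conjI ballI impI)
      fix x x' assume xx: "x \<in> X" "x' \<in> X" "dist x' x < d"
      have "dist (h x') (h x) \<le> \<bar>h x' - S N x'\<bar> + dist (S N x') (S N x) + \<bar>h x - S N x\<bar>"
        by (simp add: dist_real_def)
      also have "\<dots> < e/4 + e/2 + e/4"
        using tail[OF xx(1), of N] tail[OF xx(2), of N] d(2)[OF xx] N by linarith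
      finally show "dist (h x') (h x) < e" by simp
    qed (rule d(1))
  qed
  have hb: "bounded (h ` X)" unfolding bounded_real
  proof (intro exI ballI)
    fix y assume "y \<in> h ` X"
    then obtain x where x: "x \<in> X" "y = h x" by blast
    show "\<bar>y\<bar> \<le> K" using tail[OF x(1), of 0] x by (simp add: S_def)
  qed
  have A1: "AE x in lborel. \<forall>N. f x = (\<Sum>n<N. a^n * g (b^n * x)) + a^N * f (b^N * x)"
    unfolding AE_all_countable using iter_AE[OF b E] by blast
  have A2: "AE x in lborel. \<forall>n::nat. \<bar>f (b^n * x)\<bar> \<le> C"
    unfolding AE_all_countable using AE_scale[OF _ C] b by simp
  have A3: "AE x in lborel. \<forall>n::nat. b^n * x \<in> X \<longrightarrow> g (b^n * x) = k (b^n * x)"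
    unfolding AE_all_countable using AE_scale[OF _ k(2)] b by simp
  have "AE x in lborel. x \<in> X \<longrightarrow> f x = h x"
    using A1 A2 A3
  proof eventually_elim
    case (elim x)
    show ?case
    proof
      assume x: "x \<in> X"
      have bnd: "\<bar>f x - h x\<bar> \<le> r^N * (C + K)" for N
      proof -
        have "(\<Sum>n<N. a^n * g (b^n * x)) = S N x"
          unfolding S_def using elim(3) Xn[OF x] by (intro sum.cong) auto
        then have "f x - h x = a^N * f (b^N * x) - (h x - S N x)" using elim(1) by smt
        then have "\<bar>f x - h x\<bar> \<le> \<bar>a^N * f (b^N * x)\<bar> + \<bar>h x - S N x\<bar>" by simp
        also have "\<bar>a^N * f (b^N * x)\<bar> = r^N * \<bar>f (b^N * x)\<bar>"
          unfolding r_def by (simp add: abs_mult power_abs)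
        also have "r^N * \<bar>f (b^N * x)\<bar> \<le> r^N * C" using elim(2) r by (intro mult_left_mono) auto
        finally show ?thesis using tail[OF x, of N] by (simp add: algebra_simps)
      qed
      have "\<bar>f x - h x\<bar> \<le> 0"
        by (rule LIMSEQ_le_const[OF lim[of "C + K"]]) (use bnd in auto)
      then show "f x = h x" by simp
    qed
  qed
  then show ?thesis unfolding in_C_def BUC_def using huc hb by blast
qed

lemma equiv_X:
  fixes a b :: real and f g :: "real \<Rightarrow> real"
  assumes b: "b \<noteq> 0" and a: "\<bar>a\<bar> < 1" and X: "\<And>x. x \<in> X \<Longrightarrow> b * x \<in> X"
    and E: "AE x in lborel. M_op a b f x = g x" and Lf: "Linfty f"
  shows "in_C f X \<longleftrightarrow> in_C g X"
  using fwd[OF b X E[unfolded M_op_def]] bwd[OF b a X E[unfolded M_op_def] Lf] by blast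

theorem corollary3p7:
  fixes a b :: real and f g :: "real \<Rightarrow> real"
  assumes "b \<noteq> 0" and "\<bar>a\<bar> < 1"
    and "Linfty g" and "Linfty f"
    and "AE x in lborel. M_op a b f x = g x"
  shows "(b > 0 \<longrightarrow> (in_C f {0..} \<longleftrightarrow> in_C g {0..}))
       \<and> (b \<ge> 1 \<longrightarrow> (in_C f {1..} \<longleftrightarrow> in_C g {1..}))
       \<and> (0 < b \<and> b \<le> 1 \<longrightarrow> (in_C f {0..1} \<longleftrightarrow> in_C g {0..1}))"
proof (intro conjI impI)
  assume "b > 0"
  then show "in_C f {0..} \<longleftrightarrow> in_C g {0..}"
    by (intro equiv_X[OF assms(1,2) _ assms(5,4)]) simp
next
  assume b: "b \<ge> 1"
  have "b * x \<in> {1..}" if "x \<in> {1..}" for x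
  proof -
    have "1 * 1 \<le> b * x" using b that by (intro mult_mono) auto
    then show ?thesis by simp
  qed
  then show "in_C f {1..} \<longleftrightarrow> in_C g {1..}"
    by (intro equiv_X[OF assms(1,2) _ assms(5,4)])
next
  assume b: "0 < b \<and> b \<le> 1"
  have "b * x \<in> {0..1}" if "x \<in> {0..1}" for x
  proof -
    have "b * x \<le> 1 * 1" using b that by (intro mult_mono) auto
    then show ?thesis using b that by simp
  qed
  then show "in_C f {0..1} \<longleftrightarrow> in_C g {0..1}"
    by (intro equiv_X[OF assms(1,2) _ assms(5,4)])
qed

end
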